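(* Let $E=(C,V)$ be an approval election. Then $\mathrm{cntr\text{-}agr}(E)=1$ if and only if $E$ is an identity election, and $\mathrm{cntr\text{-}agr}(E)=0$ if and only if either $\mathrm{cen}(E)$ contains a vote approving all candidates or $\mathrm{cen}(E)$ contains a vote disapproving all candidates.
   Context: An (approval) election is a pair $E=(C,V)$ with candidate set $C=\{c_1,\dots,c_m\}$ and a collection of voters $V=(v_1,\dots,v_n)$; each vote is a binary vector in $\{0,1\}^m$ ($v_i[j]=1$ iff voter $v_i$ approves $c_j$). $A(v)$ is the set of candidates approved by vote $v$ and $A(c)$ the set of voters approving candidate $c$. An identity election is one in which all votes are identical. The Hamming distance between votes is $\mathrm{ham}(u,v)=\sum_{j=1}^m|u[j]-v[j]|$. Let $\mathrm{avl}(E)=\frac{1}{|V|}\sum_{v\in V}|A(v)|$ and $\mathrm{rev\text{-}avl}(E)=\frac{1}{|V|}\sum_{v\in V}(|C|-|A(v)|)$ (the average number of disapproved candidates). A vote $u\in\{0,1\}^m$ is central for $E$ if for each candidate $c_j$, $u$ agrees regarding $c_j$ (i.e. $u[j]=v_i[j]$) with at least half of the voters; $\mathrm{cen}(E)$ denotes the set of all central votes. Central Agreement is $\mathrm{cntr\text{-}agr}(E)=1-\frac{\sum_{v_i\in V}\mathrm{ham}(v_i,u)}{|V|\cdot\min(\mathrm{avl}(E),\mathrm{rev\text{-}avl}(E))}$ for an arbitrary $u\in\mathrm{cen}(E)$ (the value does not depend on the choice of $u$). *)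

theory Defs
  imports Main Complex_Main
begin

text \<open>Candidates are c_0,...,c_{m-1} (indices j < m). A vote is a bool list of
  length m (True = approval). The voters form a list V (a collection, duplicates allowed).\<close>

definition wf_election :: "nat \<Rightarrow> bool list list \<Rightarrow> bool" where
  "wf_election m V \<longleftrightarrow> V \<noteq> [] \<and> (\<forall>v\<in>set V. length v = m)"

definition ham :: "nat \<Rightarrow> bool list \<Rightarrow> bool list \<Rightarrow> nat" where
  "ham m u v = card {j. j < m \<and> u ! j \<noteq> v ! j}"

definition num_appr :: "nat \<Rightarrow> bool list \<Rightarrow> nat" where
  "num_appr m v = card {j. j < m \<and> v ! j}"

definition avl :: "nat \<Rightarrow> bool list list \<Rightarrow> real" where
  "avl m V = (\<Sum>v\<leftarrow>V. real (num_appr m v)) / real (length V)"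

definition rev_avl :: "nat \<Rightarrow> bool list list \<Rightarrow> real" where
  "rev_avl m V = (\<Sum>v\<leftarrow>V. real m - real (num_appr m v)) / real (length V)"

definition is_identity :: "bool list list \<Rightarrow> bool" where
  "is_identity V \<longleftrightarrow> (\<forall>v\<in>set V. \<forall>w\<in>set V. v = w)"

definition cen :: "nat \<Rightarrow> bool list list \<Rightarrow> bool list set" where
  "cen m V = {u. length u = m \<and>
     (\<forall>j<m. 2 * card {i. i < length V \<and> V ! i ! j = u ! j} \<ge> length V)}"

definition cntr_agr :: "nat \<Rightarrow> bool list list \<Rightarrow> real" where
  "cntr_agr m V = (let u = (SOME u. u \<in> cen m V) in
     1 - (\<Sum>v\<leftarrow>V. real (ham m v u)) / (real (length V) * min (avl m V) (rev_avl m V)))"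

end

theory Submission
  imports Defs
begin

lemma card_cnt: "card {j. j < (m::nat) \<and> P j} = (\<Sum>j<m. if P j then 1 else (0::nat))"
proof -
  have "card {j. j < m \<and> P j} = card {j\<in>{..<m}. P j}" by (rule arg_cong[where f=card]) auto
  also have "\<dots> = (\<Sum>j\<in>{j\<in>{..<m}. P j}. (1::nat))" by simp
  also have "\<dots> = (\<Sum>j<m. if P j then 1 else (0::nat))"
    using sum.inter_filter[where g="\<lambda>_. (1::nat)" and P=P and A="{..<m}"] by simp
  finally show ?thesis .
qed
lemma mn: "(c::real) > 0 \<Longrightarrow> c * min (x/c) (y/c) = min x y"
  by (simp add: min_def divide_le_cancel)

lemma list_swap:
  "(\<Sum>v\<leftarrow>V. real (card {j. j < (m::nat) \<and> P v j}))
     = real (\<Sum>j<m. card {i. i < length V \<and> P (V!i) j})"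
proof -
  have "(\<Sum>v\<leftarrow>V. real (card {j. j < m \<and> P v j})) = (\<Sum>i<length V. real (card {j. j < m \<and> P (V!i) j}))"
    by (simp add: sum_list_sum_nth atLeast0LessThan)
  also have "\<dots> = (\<Sum>i<length V. real (\<Sum>j<m. if P (V!i) j then 1 else (0::nat)))"
    by (intro sum.cong refl arg_cong[where f=real] card_cnt)
  also have "\<dots> = real (\<Sum>i<length V. \<Sum>j<m. if P (V!i) j then 1 else (0::nat))"
    by (rule of_nat_sum[symmetric])
  also have "\<dots> = real (\<Sum>j<m. \<Sum>i<length V. if P (V!i) j then 1 else (0::nat))"
    by (rule arg_cong[where f=real], rule sum.swap)
  also have "\<dots> = real (\<Sum>j<m. card {i. i < length V \<and> P (V!i) j})"
    by (intro arg_cong[where f=real] sum.cong refl card_cnt[symmetric])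
  finally show ?thesis .
qed

lemma card_split: "card {i. i < n \<and> P i} + card {i. i < n \<and> \<not> P i} = (n::nat)"
proof -
  have "card {i. i < n \<and> P i} + card {i. i < n \<and> \<not> P i} = card ({i. i < n \<and> P i} \<union> {i. i < n \<and> \<not> P i})"
    by (rule card_Un_disjoint[symmetric]) auto
  also have "{i. i < n \<and> P i} \<union> {i. i < n \<and> \<not> P i} = {..<n}" by auto
  finally show ?thesis by simp
qed

lemma sum_eq_le:
  fixes d a :: "nat \<Rightarrow> nat"
  assumes "\<And>j. j < m \<Longrightarrow> d j \<le> a j" and "(\<Sum>j<m. d j) = (\<Sum>j<m. a j)"
  shows "\<forall>j<m. d j = a j"
proof -
  have "(\<Sum>j<m. a j - d j) = (\<Sum>j<m. a j) - (\<Sum>j<m. d j)"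
    using assms(1) by (intro sum_subtractf_nat) simp
  then have "(\<Sum>j<m. a j - d j) = 0" using assms(2) by simp
  then have z: "\<forall>j<m. a j - d j = 0" by simp
  show ?thesis
  proof (intro allI impI)
    fix j assume j: "j < m"
    have "a j - d j = 0" using z j by blast
    then show "d j = a j" using assms(1)[OF j] by linarith
  qed
qed

lemma real_sum_diff:
  fixes a :: "nat \<Rightarrow> nat"
  assumes "\<And>j. j < m \<Longrightarrow> a j \<le> n"
  shows "real (\<Sum>j<m. n - a j) = real n * real m - real (\<Sum>j<m. a j)"
proof -
  have "real (\<Sum>j<m. n - a j) = (\<Sum>j<m. real (n - a j))" by (rule of_nat_sum)
  also have "\<dots> = (\<Sum>j<m. real n - real (a j))"
    by (rule sum.cong) (auto simp: assms of_nat_diff)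
  also have "\<dots> = (\<Sum>j<m. real n) - (\<Sum>j<m. real (a j))"
    by (rule sum_subtractf)
  also have "\<dots> = real n * real m - real (\<Sum>j<m. a j)"
    by (simp add: of_nat_sum mult.commute)
  finally show ?thesis .
qed

theorem proposition2:
  fixes m :: nat and V :: "bool list list"
  assumes "wf_election m V"
    and "min (avl m V) (rev_avl m V) > 0"
  shows "(cntr_agr m V = 1 \<longleftrightarrow> is_identity V)
       \<and> (cntr_agr m V = 0 \<longleftrightarrow>
            ((\<exists>u\<in>cen m V. \<forall>j<m. u ! j) \<or> (\<exists>u\<in>cen m V. \<forall>j<m. \<not> u ! j)))"
proof -
  define n where "n = length V"
  have npos: "n > 0" using assms(1) unfolding wf_election_def n_def by simp
  have lenV: "\<And>i. i < n \<Longrightarrow> length (V!i) = m"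
    using assms(1) unfolding wf_election_def n_def by auto
  define a where "a j = card {i. i < n \<and> V!i!j}" for j
  have a_le: "a j \<le> n" for j
  proof -
    have "a j \<le> card {..<n}" unfolding a_def by (rule card_mono) auto
    then show ?thesis by simp
  qed
  have a_split: "a j + card {i. i < n \<and> \<not> V!i!j} = n" for j
    unfolding a_def by (rule card_split)
  define u0 where "u0 = map (\<lambda>j. n \<le> 2 * a j) [0..<m]"
  have "u0 \<in> cen m V"
    unfolding cen_def
  proof (intro CollectI conjI allI impI)
    show "length u0 = m" unfolding u0_def by simp
    fix j assume j: "j < m"
    show "length V \<le> 2 * card {i. i < length V \<and> V ! i ! j = u0 ! j}"
    proof (cases "n \<le> 2 * a j")
      case True
      then have "u0 ! j" using j unfolding u0_def by simp
      then show ?thesis using True unfolding a_def n_def by simp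
    next
      case False
      then have "\<not> u0 ! j" using j unfolding u0_def by simp
      then show ?thesis using False a_split[of j] unfolding n_def by simp
    qed
  qed
  define u where "u = (SOME u. u \<in> cen m V)"
  have ucen: "u \<in> cen m V" unfolding u_def by (rule someI) (rule \<open>u0 \<in> cen m V\<close>)
  then have ulen: "length u = m"
    and uagr: "\<And>j. j < m \<Longrightarrow> n \<le> 2 * card {i. i < n \<and> V!i!j = u!j}"
    unfolding cen_def n_def by auto
  define d where "d j = card {i. i < n \<and> V!i!j \<noteq> u!j}" for j
  have d2: "2 * d j \<le> n" if "j < m" for j
  proof -
    have "card {i. i < n \<and> V!i!j = u!j} + d j = n" unfolding d_def by (rule card_split)
    then show ?thesis using uagr[OF that] by simp
  qed
  have dcase: "d j = (if u!j then n - a j else a j)" for j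
  proof (cases "u!j")
    case True
    then have "d j = card {i. i < n \<and> \<not> V!i!j}" unfolding d_def by simp
    then show ?thesis using a_split[of j] True by simp
  next
    case False
    then show ?thesis unfolding d_def a_def by simp
  qed
  have d_le_a: "d j \<le> a j" if "j < m" for j
    using dcase[of j] d2[OF that] a_le[of j] by (auto split: if_splits)
  have d_le_na: "d j \<le> n - a j" if "j < m" for j
    using dcase[of j] d2[OF that] a_le[of j] by (auto split: if_splits)
  define S where "S = (\<Sum>j<m. d j)"
  define A where "A = (\<Sum>j<m. a j)"
  have hS: "(\<Sum>v\<leftarrow>V. real (ham m v u)) = real S"
    unfolding ham_def S_def d_def n_def by (rule list_swap)
  have hA: "(\<Sum>v\<leftarrow>V. real (num_appr m v)) = real A"
    unfolding num_appr_def A_def a_def n_def by (rule list_swap)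
  have hR: "(\<Sum>v\<leftarrow>V. real m - real (num_appr m v)) = real n * real m - real A"
    using hA by (simp add: sum_list_subtractf n_def sum_list_triv)
  have avl_eq: "avl m V = real A / real n" unfolding avl_def hA n_def ..
  have rev_eq: "rev_avl m V = (real n * real m - real A) / real n" unfolding rev_avl_def hR n_def ..
  define M where "M = min (real A) (real n * real m - real A)"
  have denom: "real (length V) * min (avl m V) (rev_avl m V) = M"
    unfolding avl_eq rev_eq M_def n_def[symmetric] using npos
    by (simp add: mn)
  have Mpos: "M > 0" using assms(2) npos denom n_def by (metis mult_pos_pos of_nat_0_less_iff)
  have cntr: "cntr_agr m V = 1 - real S / M"
    unfolding cntr_agr_def u_def[symmetric] Let_def hS denom ..
  have A_le: "A \<le> n * m"
  proof -
    have "A \<le> (\<Sum>j<m. n)" unfolding A_def by (rule sum_mono) (rule a_le)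
    then show ?thesis by (simp add: mult.commute)
  qed
  have part1: "cntr_agr m V = 1 \<longleftrightarrow> is_identity V"
  proof -
    have "cntr_agr m V = 1 \<longleftrightarrow> S = 0" using Mpos by (simp add: cntr)
    also have "\<dots> \<longleftrightarrow> (\<forall>j<m. d j = 0)" by (simp add: S_def Ball_def lessThan_iff)
    also have "\<dots> \<longleftrightarrow> (\<forall>j<m. \<forall>i<n. V!i!j = u!j)"
    proof -
      have "d j = 0 \<longleftrightarrow> (\<forall>i<n. V!i!j = u!j)" for j
        by (simp add: d_def card_eq_0_iff)
      then show ?thesis by simp
    qed
    also have "\<dots> \<longleftrightarrow> is_identity V"
    proof
      assume H: "\<forall>j<m. \<forall>i<n. V!i!j = u!j"
      have Vu: "V!i = u" if i: "i < n" for i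
      proof (rule nth_equalityI)
        show "length (V!i) = length u" using lenV[OF i] ulen by simp
        fix k assume k: "k < length (V!i)"
        then have "k < m" using lenV[OF i] by simp
        then show "V!i!k = u!k" using H i by blast
      qed
      have "v = u" if "v \<in> set V" for v
      proof -
        have "\<exists>i<length V. V!i = v" using that by (simp only: in_set_conv_nth)
        then obtain i where "i < length V" "V!i = v" by blast
        then have "i < n" "v = V!i" unfolding n_def by simp_all
        then show ?thesis using Vu by simp
      qed
      then have Vall: "\<And>v. v \<in> set V \<Longrightarrow> v = u" by blast
      show "is_identity V" unfolding is_identity_def
      proof (intro ballI)
        fix v w assume "v \<in> set V" "w \<in> set V"
        then have "v = u" "w = u" using Vall by blast+
        then show "v = w" by (rule trans[OF _ sym])
      qed
    next
      assume I: "is_identity V"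
      have eq0: "V!i = V!0" if i: "i < n" for i
      proof -
        have "V!i \<in> set V" "V!0 \<in> set V" using i npos unfolding n_def by simp_all
        then show ?thesis using I unfolding is_identity_def by blast
      qed
      show "\<forall>j<m. \<forall>i<n. V!i!j = u!j"
      proof (intro allI impI)
        fix j i assume j: "j < m" and i: "i < n"
        show "V!i!j = u!j"
        proof (rule ccontr)
          assume ne: "V!i!j \<noteq> u!j"
          have "V!k!j \<noteq> u!j" if "k < n" for k using eq0[OF that] eq0[OF i] ne by simp
          then have E: "{i. i < n \<and> V!i!j = u!j} = {}" by blast
          have "card {i. i < n \<and> V!i!j = u!j} = 0" unfolding E by simp
          then show False using uagr[OF j] npos by linarith
        qed
      qed
    qed
    finally show ?thesis .
  qed
  have part2: "cntr_agr m V = 0 \<longleftrightarrow>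
            ((\<exists>u\<in>cen m V. \<forall>j<m. u ! j) \<or> (\<exists>u\<in>cen m V. \<forall>j<m. \<not> u ! j))"
  proof -
    have c0: "cntr_agr m V = 0 \<longleftrightarrow> real S = M" using cntr Mpos by auto
    have RA: "real (\<Sum>j<m. n - a j) = real n * real m - real A"
      unfolding A_def by (rule real_sum_diff) (rule a_le)
    show ?thesis
    proof
      assume "cntr_agr m V = 0"
      then have SM: "real S = M" using c0 by simp
      show "(\<exists>u\<in>cen m V. \<forall>j<m. u ! j) \<or> (\<exists>u\<in>cen m V. \<forall>j<m. \<not> u ! j)"
      proof (cases "real A \<le> real n * real m - real A")
        case True
        then have "S = A" using SM unfolding M_def by simp
        then have da: "\<forall>j<m. d j = a j"
          unfolding S_def A_def by (intro sum_eq_le) (auto intro: d_le_a)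
        have "replicate m False \<in> cen m V"
          unfolding cen_def
        proof (intro CollectI conjI allI impI)
          fix j assume j: "j < m"
          have "card {i. i < length V \<and> V ! i ! j = replicate m False ! j} = n - a j"
            using a_split[of j] j unfolding n_def by simp
          then show "length V \<le> 2 * card {i. i < length V \<and> V ! i ! j = replicate m False ! j}"
            using da d2[OF j] j a_le[of j] unfolding n_def by simp
        qed simp
        then show ?thesis by (intro disjI2 bexI[of _ "replicate m False"]) auto
      next
        case False
        then have "real S = real (\<Sum>j<m. n - a j)" using SM RA unfolding M_def by simp
        then have "S = (\<Sum>j<m. n - a j)" by (simp only: of_nat_eq_iff)
        then have da: "\<forall>j<m. d j = n - a j"
          unfolding S_def by (intro sum_eq_le) (auto intro: d_le_na)
        have "replicate m True \<in> cen m V"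
          unfolding cen_def
        proof (intro CollectI conjI allI impI)
          fix j assume j: "j < m"
          have "card {i. i < length V \<and> V ! i ! j = replicate m True ! j} = a j"
            using j unfolding n_def a_def by simp
          then show "length V \<le> 2 * card {i. i < length V \<and> V ! i ! j = replicate m True ! j}"
            using da d2[OF j] j a_le[of j] unfolding n_def by simp
        qed simp
        then show ?thesis by (intro disjI1 bexI[of _ "replicate m True"]) auto
      qed
    next
      assume "(\<exists>u\<in>cen m V. \<forall>j<m. u ! j) \<or> (\<exists>u\<in>cen m V. \<forall>j<m. \<not> u ! j)"
      then show "cntr_agr m V = 0"
      proof
        assume "\<exists>w\<in>cen m V. \<forall>j<m. w ! j"
        then obtain w where w: "w \<in> cen m V" "\<forall>j<m. w ! j" by blast
        have big: "n \<le> 2 * a j" if j: "j < m" for j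
          using w j unfolding cen_def a_def n_def by auto
        have dj: "d j = n - a j" if j: "j < m" for j
          using dcase[of j] big[OF j] a_le[of j] d2[OF j] by auto
        have "S = (\<Sum>j<m. n - a j)" unfolding S_def using dj by simp
        then have S1: "real S = real n * real m - real A" using RA by simp
        have "(\<Sum>j<m. n - a j) \<le> A" unfolding A_def
        proof (rule sum_mono)
          fix j assume "j \<in> {..<m}"
          then have "n \<le> 2 * a j" using big by simp
          then show "n - a j \<le> a j" by arith
        qed
        then have "real n * real m - real A \<le> real A" using RA
          by (metis of_nat_le_iff)
        then have "real S = M" using S1 unfolding M_def by simp
        then show ?thesis using c0 by simp
      next
        assume "\<exists>w\<in>cen m V. \<forall>j<m. \<not> w ! j"
        then obtain w where w: "w \<in> cen m V" "\<forall>j<m. \<not> w ! j" by blast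
        have small: "2 * a j \<le> n" if j: "j < m" for j
        proof -
          have "n \<le> 2 * card {i. i < n \<and> \<not> V!i!j}"
            using w j unfolding cen_def n_def by auto
          then show ?thesis using a_split[of j] by simp
        qed
        have dj: "d j = a j" if j: "j < m" for j
          using dcase[of j] small[OF j] a_le[of j] d2[OF j] by auto
        have "S = A" unfolding S_def A_def using dj by simp
        have "A \<le> (\<Sum>j<m. n - a j)" unfolding A_def
        proof (rule sum_mono)
          fix j assume "j \<in> {..<m}"
          then have "2 * a j \<le> n" using small by simp
          then show "a j \<le> n - a j" by arith
        qed
        then have "real A \<le> real n * real m - real A" using RA
          by (metis of_nat_le_iff)
        then have "real S = M" using \<open>S = A\<close> unfolding M_def by simp
        then show ?thesis using c0 by simp
      qed
    qed
  qed
  show ?thesis by (rule conjI[OF part1 part2])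
qed

end
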